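(* Consider the hybrid system $\mathcal H$ described in the context (with arbitrary design choices $\alpha_i\in\mathcal K_\infty$, $c_i\ge0$, $b_i\in[0,1]$, $\sigma_i\ge0$, $\varepsilon_i>0$), and suppose Assumption 2 holds. Let $q=(x,z,e,\eta)$ be a solution of $\mathcal H$ for some input $w\in\mathcal L_{\mathcal W}$, and let $i\in\{1,\dots,N\}$. If there exists $(t,j)\in\operatorname{dom}q$ such that $$|e_i(t',j')|<\gamma_i^{-1}(\varepsilon_i)\quad\text{for all }(t',j')\in\operatorname{dom}q\text{ with }t'+j'\ge t+j,$$ then $\sup\{k\in\mathbb Z_{\ge0}:\exists s,\ (s,k)\in\mathcal T_i(q)\}<\infty$. Moreover, if such a condition holds for every $i\in\{1,\dots,N\}$, then $\sup\{k\in\mathbb Z_{\ge0}:\exists s,\ (s,k)\in\operatorname{dom}q\}<\infty$.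
   Context: Notation: $\mathcal K_\infty$ is the class of continuous, strictly increasing, unbounded functions $\mathbb R_{\ge0}\to\mathbb R_{\ge0}$ vanishing at $0$; $|\cdot|$ is the Euclidean norm. For $S\subseteq\mathbb R^m$, $\mathcal L_S$ is the set of Lebesgue measurable, locally essentially bounded functions $\mathbb R_{\ge0}\to S$. Plant: $\dot x=f_p(x,u,v)$, $y=h(x)$, $x\in\mathbb R^{n_x}$, $u\in\mathcal L_{\mathcal U}$, $v\in\mathcal L_{\mathcal V}$, $\mathcal U\subseteq\mathbb R^{n_u}$, $\mathcal V\subseteq\mathbb R^{n_v}$; $f_p$ locally Lipschitz in $x$, continuous in the others; $h$ continuously differentiable. Output split into $N\in\{1,\dots,n_y\}$ nodes $y=(h_1(x),\dots,h_N(x))$, $y_i\in\mathbb R^{n_{y_i}}$. Observer data: continuous $f_o:\mathbb R^{n_z}\times\mathbb R^{n_u}\times\mathbb R^{n_y}\times\mathbb R^{n_y}\to\mathbb R^{n_z}$ ($n_z\ge n_x$), $\psi:\mathbb R^{n_z}\to\mathbb R^{n_x}$ with right inverse $\psi^{-R}$; the observer has access to $u$ at all times (Assumption 1). Assumption 2: there exist $\underline\alpha,\overline\alpha,\alpha,\gamma_1,\dots,\gamma_N,\theta\in\mathcal K_\infty$ and continuously differentiable $V:\mathbb R^{n_x}\times\mathbb R^{n_z}\to\mathbb R_{\ge0}$ such that for all $x,z$, $u\in\mathcal U$, $v\in\mathcal V$, $e=(e_1,\dots,e_N)\in\mathbb R^{n_y}$ ($e_i\in\mathbb R^{n_{y_i}}$),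 $\hat y\in\mathbb R^{n_y}$: $\underline\alpha(|x-\psi(z)|)\le V(x,z)\le\overline\alpha(|\psi^{-R}(x)-z|)$ and $\langle\nabla V(x,z),(f_p(x,u,v),f_o(z,u,h(x)+e,\hat y))\rangle\le-\alpha(V(x,z))+\sum_i\gamma_i(|e_i|)+\theta(|v|)$. Hybrid system $\mathcal H$: state $q=(x,z,e,\eta)\in\mathcal Q:=\mathbb R^{n_x}\times\mathbb R^{n_z}\times\mathbb R^{n_y}\times\mathbb R^N_{\ge0}$, input $w=(u,v)\in\mathcal W:=\mathcal U\times\mathcal V$. Flow map $F(q,w):=(f_p(x,u,v),f_o(z,u,h(x)+e,h(\psi(z))),g_1,\dots,g_N,\ell_1,\dots,\ell_N)$, $g_i=-\frac{\partial h_i(x)}{\partial x}f_p(x,u,v)$, $\ell_i=-\alpha_i(\eta_i)+c_i\gamma_i(|e_i|)$. $\mathcal C:=\bigcap_i\{q:\gamma_i(|e_i|)\le\sigma_i\alpha_i(\eta_i)+\varepsilon_i\}$, $\mathcal D:=\bigcup_i\mathcal D_i$, $\mathcal D_i:=\{q:\gamma_i(|e_i|)\ge\sigma_i\alpha_i(\eta_i)+\varepsilon_i\}$. $G(q):=\bigcup_iG_i(q)$, $G_i(q)=\emptyset$ if $q\notin\mathcal D_i$, else $G_i(q)=\{(x,z,e',\eta')\}$ with $e'_i=0,\eta'_i=b_i\eta_i$ and $e'_j=e_j,\eta'_j=\eta_j$ for $j\ne i$. Dynamics: $\dot q=F(q,w)$, $q\in\mathcal C$; $q^+\in G(q)$,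 $q\in\mathcal D$. Solutions: a hybrid time domain is a set $E\subset\mathbb R_{\ge0}\times\mathbb Z_{\ge0}$ such that each truncation $E\cap([0,T]\times\{0,\dots,J\})$, $(T,J)\in E$, equals $\bigcup_j([t_j,t_{j+1}],j)$ for finitely many $0=t_0\le t_1\le\dots$. A hybrid arc $q$ (with $q(\cdot,j)$ locally absolutely continuous) is a solution for input $w\in\mathcal L_{\mathcal W}$ if for each $j$ with $I^j:=\{t:(t,j)\in\operatorname{dom}q\}$ of nonempty interior, $\dot q(t,j)=F(q(t,j),w(t))$ and $q(t,j)\in\mathcal C$ for a.a. $t\in I^j$, and whenever $(t,j),(t,j+1)\in\operatorname{dom}q$, $q(t,j)\in\mathcal D$ and $q(t,j+1)\in G(q(t,j))$. For a solution $q$, $\mathcal T_i(q):=\{(t,j)\in\operatorname{dom}q:q(t,j)\in\mathcal D_i\text{ and }q(t,j+1)\in G_i(q(t,j))\}$. *)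

theory Defs
  imports "HOL-Analysis.Analysis"
begin

definition class_Kinf :: "(real \<Rightarrow> real) \<Rightarrow> bool" where
  "class_Kinf f \<longleftrightarrow> continuous_on {0..} f \<and> strict_mono_on {0..} f \<and> f 0 = 0
     \<and> f ` {0..} \<subseteq> {0..} \<and> \<not> bdd_above (f ` {0..})"

definition Kinf_inv :: "(real \<Rightarrow> real) \<Rightarrow> real \<Rightarrow> real" where
  "Kinf_inv f y = the_inv_into {0..} f y"

definition Linf_loc :: "'a::euclidean_space set \<Rightarrow> (real \<Rightarrow> 'a) set" where
  "Linf_loc S = {w. w \<in> borel_measurable (restrict_space lebesgue {0..})
      \<and> (\<forall>t\<ge>0. w t \<in> S)
      \<and> (\<forall>T\<ge>0. \<exists>B. AE t in lebesgue. t \<in> {0..T} \<longrightarrow> norm (w t) \<le> B)}"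

definition abs_cont_on :: "real \<Rightarrow> real \<Rightarrow> (real \<Rightarrow> 'a::real_normed_vector) \<Rightarrow> bool" where
  "abs_cont_on lo hi f \<longleftrightarrow> (\<forall>\<epsilon>>0. \<exists>\<delta>>0. \<forall>(n::nat) (a::nat\<Rightarrow>real) b.
      (\<forall>k<n. lo \<le> a k \<and> a k \<le> b k \<and> b k \<le> hi)
      \<and> (\<forall>k<n. \<forall>l<n. k \<noteq> l \<longrightarrow> b k \<le> a l \<or> b l \<le> a k)
      \<and> (\<Sum>k<n. b k - a k) < \<delta>
      \<longrightarrow> (\<Sum>k<n. norm (f (b k) - f (a k))) < \<epsilon>)"

definition loc_abs_cont_on :: "real set \<Rightarrow> (real \<Rightarrow> 'a::real_normed_vector) \<Rightarrow> bool" where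
  "loc_abs_cont_on I f \<longleftrightarrow> (\<forall>lo hi. {lo..hi} \<subseteq> I \<longrightarrow> abs_cont_on lo hi f)"

definition hybrid_time_domain :: "(real \<times> nat) set \<Rightarrow> bool" where
  "hybrid_time_domain E \<longleftrightarrow> E \<subseteq> {0..} \<times> UNIV \<and>
     (\<forall>(T,J)\<in>E. \<exists>ts::nat \<Rightarrow> real. ts 0 = 0 \<and> (\<forall>j\<le>J. ts j \<le> ts (Suc j)) \<and>
        E \<inter> ({0..T} \<times> {0..J}) = (\<Union>j\<in>{0..J}. {ts j..ts (Suc j)} \<times> {j}))"

definition Ij :: "(real \<times> nat) set \<Rightarrow> nat \<Rightarrow> real set" where
  "Ij E j = {t. (t, j) \<in> E}"

definition hybrid_arc :: "(real \<times> nat) set \<Rightarrow> (real \<Rightarrow> nat \<Rightarrow> 'a::real_normed_vector) \<Rightarrow> bool" where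
  "hybrid_arc E q \<longleftrightarrow> hybrid_time_domain E \<and> (\<forall>j. loc_abs_cont_on (Ij E j) (\<lambda>t. q t j))"

definition is_solution ::
  "('s::real_normed_vector \<Rightarrow> 'w \<Rightarrow> 's) \<Rightarrow> 's set \<Rightarrow> 's set \<Rightarrow> ('s \<Rightarrow> 's set)
   \<Rightarrow> (real \<Rightarrow> 'w) \<Rightarrow> (real \<times> nat) set \<Rightarrow> (real \<Rightarrow> nat \<Rightarrow> 's) \<Rightarrow> bool" where
  "is_solution F C D G w E q \<longleftrightarrow> hybrid_arc E q
     \<and> (\<forall>j. interior (Ij E j) \<noteq> {} \<longrightarrow>
          (AE t in lebesgue. t \<in> Ij E j \<longrightarrow>
             ((\<lambda>s. q s j) has_vector_derivative F (q t j) (w t)) (at t within Ij E j)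
             \<and> q t j \<in> C))
     \<and> (\<forall>t j. (t, j) \<in> E \<and> (t, Suc j) \<in> E \<longrightarrow> q t j \<in> D \<and> q t (Suc j) \<in> G (q t j))"

text \<open>Output coordinates (index type 'm, n_y = CARD('m)) are split into nodes
  (index type 'n, N = CARD('n)) by the map blk; e_i is the restriction of e to
  the coordinates k with blk k = i, and its Euclidean norm is blknorm.\<close>
definition blknorm :: "('m::finite \<Rightarrow> 'n) \<Rightarrow> real^'m \<Rightarrow> 'n \<Rightarrow> real" where
  "blknorm blk e i = sqrt (\<Sum>k\<in>{k. blk k = i}. (e $ k)\<^sup>2)"

type_synonym ('x,'z,'m,'n) hstate = "'x \<times> 'z \<times> (real^'m) \<times> (real^'n)"

definition Qset :: "('x,'z,'m::finite,'n::finite) hstate set" where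
  "Qset = {(x,z,e,\<eta>). \<forall>i. \<eta> $ i \<ge> 0}"

definition flowF ::
  "('x::real_normed_vector \<Rightarrow> 'u \<Rightarrow> 'v \<Rightarrow> 'x) \<Rightarrow> ('z \<Rightarrow> 'u \<Rightarrow> real^'m \<Rightarrow> real^'m \<Rightarrow> 'z)
   \<Rightarrow> ('x \<Rightarrow> real^'m::finite) \<Rightarrow> ('z \<Rightarrow> 'x) \<Rightarrow> ('m \<Rightarrow> 'n::finite)
   \<Rightarrow> ('n \<Rightarrow> real \<Rightarrow> real) \<Rightarrow> ('n \<Rightarrow> real) \<Rightarrow> ('n \<Rightarrow> real \<Rightarrow> real)
   \<Rightarrow> ('x,'z,'m,'n) hstate \<Rightarrow> 'u \<times> 'v \<Rightarrow> ('x,'z,'m,'n) hstate" where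
  "flowF fp fo h \<psi> blk \<alpha>d c \<gamma> = (\<lambda>(x,z,e,\<eta>) (u,v).
     (fp x u v,
      fo z u (h x + e) (h (\<psi> z)),
      - frechet_derivative h (at x) (fp x u v),
      \<chi> i. - \<alpha>d i (\<eta> $ i) + c i * \<gamma> i (blknorm blk e i)))"

definition flowC ::
  "('m::finite \<Rightarrow> 'n::finite) \<Rightarrow> ('n \<Rightarrow> real \<Rightarrow> real) \<Rightarrow> ('n \<Rightarrow> real) \<Rightarrow> ('n \<Rightarrow> real)
   \<Rightarrow> ('n \<Rightarrow> real \<Rightarrow> real) \<Rightarrow> ('x,'z,'m,'n) hstate set" where
  "flowC blk \<alpha>d \<sigma> \<epsilon> \<gamma> = {q \<in> Qset. case q of (x,z,e,\<eta>) \<Rightarrow>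
      (\<forall>i. \<gamma> i (blknorm blk e i) \<le> \<sigma> i * \<alpha>d i (\<eta> $ i) + \<epsilon> i)}"

definition jumpDi ::
  "('m::finite \<Rightarrow> 'n::finite) \<Rightarrow> ('n \<Rightarrow> real \<Rightarrow> real) \<Rightarrow> ('n \<Rightarrow> real) \<Rightarrow> ('n \<Rightarrow> real)
   \<Rightarrow> ('n \<Rightarrow> real \<Rightarrow> real) \<Rightarrow> 'n \<Rightarrow> ('x,'z,'m,'n) hstate set" where
  "jumpDi blk \<alpha>d \<sigma> \<epsilon> \<gamma> i = {q \<in> Qset. case q of (x,z,e,\<eta>) \<Rightarrow>
      \<gamma> i (blknorm blk e i) \<ge> \<sigma> i * \<alpha>d i (\<eta> $ i) + \<epsilon> i}"

definition jumpD ::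
  "('m::finite \<Rightarrow> 'n::finite) \<Rightarrow> ('n \<Rightarrow> real \<Rightarrow> real) \<Rightarrow> ('n \<Rightarrow> real) \<Rightarrow> ('n \<Rightarrow> real)
   \<Rightarrow> ('n \<Rightarrow> real \<Rightarrow> real) \<Rightarrow> ('x,'z,'m,'n) hstate set" where
  "jumpD blk \<alpha>d \<sigma> \<epsilon> \<gamma> = (\<Union>i. jumpDi blk \<alpha>d \<sigma> \<epsilon> \<gamma> i)"

definition jumpGi ::
  "('m::finite \<Rightarrow> 'n::finite) \<Rightarrow> ('n \<Rightarrow> real \<Rightarrow> real) \<Rightarrow> ('n \<Rightarrow> real) \<Rightarrow> ('n \<Rightarrow> real)
   \<Rightarrow> ('n \<Rightarrow> real \<Rightarrow> real) \<Rightarrow> ('n \<Rightarrow> real) \<Rightarrow> 'n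
   \<Rightarrow> ('x,'z,'m,'n) hstate \<Rightarrow> ('x,'z,'m,'n) hstate set" where
  "jumpGi blk \<alpha>d \<sigma> \<epsilon> \<gamma> b i q =
     (if q \<notin> jumpDi blk \<alpha>d \<sigma> \<epsilon> \<gamma> i then {}
      else (case q of (x,z,e,\<eta>) \<Rightarrow>
        {(x, z, \<chi> k. if blk k = i then 0 else e $ k,
                \<chi> l. if l = i then b i * \<eta> $ i else \<eta> $ l)}))"

definition jumpG ::
  "('m::finite \<Rightarrow> 'n::finite) \<Rightarrow> ('n \<Rightarrow> real \<Rightarrow> real) \<Rightarrow> ('n \<Rightarrow> real) \<Rightarrow> ('n \<Rightarrow> real)
   \<Rightarrow> ('n \<Rightarrow> real \<Rightarrow> real) \<Rightarrow> ('n \<Rightarrow> real)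
   \<Rightarrow> ('x,'z,'m,'n) hstate \<Rightarrow> ('x,'z,'m,'n) hstate set" where
  "jumpG blk \<alpha>d \<sigma> \<epsilon> \<gamma> b q = (\<Union>i. jumpGi blk \<alpha>d \<sigma> \<epsilon> \<gamma> b i q)"

definition jumpTimes ::
  "('m::finite \<Rightarrow> 'n::finite) \<Rightarrow> ('n \<Rightarrow> real \<Rightarrow> real) \<Rightarrow> ('n \<Rightarrow> real) \<Rightarrow> ('n \<Rightarrow> real)
   \<Rightarrow> ('n \<Rightarrow> real \<Rightarrow> real) \<Rightarrow> ('n \<Rightarrow> real) \<Rightarrow> 'n
   \<Rightarrow> (real \<times> nat) set \<Rightarrow> (real \<Rightarrow> nat \<Rightarrow> ('x,'z,'m,'n) hstate) \<Rightarrow> (real \<times> nat) set" where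
  "jumpTimes blk \<alpha>d \<sigma> \<epsilon> \<gamma> b i E q = {(t,j) \<in> E. (t, Suc j) \<in> E
      \<and> q t j \<in> jumpDi blk \<alpha>d \<sigma> \<epsilon> \<gamma> i
      \<and> q t (Suc j) \<in> jumpGi blk \<alpha>d \<sigma> \<epsilon> \<gamma> b i (q t j)}"

definition err_of :: "('x,'z,'m::finite,'n::finite) hstate \<Rightarrow> real^'m" where
  "err_of q = fst (snd (snd q))"

end

theory Submission
  imports Defs
begin

lemma Kinf_lt:
  assumes K: "class_Kinf g" and e: "\<epsilon> > 0" and x0: "0 \<le> x" and lt: "x < Kinf_inv g \<epsilon>"
  shows "g x < \<epsilon>"
proof -
  from K have c: "continuous_on {0..} g" and sm: "strict_mono_on {0..} g" and g0: "g 0 = 0"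
    and nb: "\<not> bdd_above (g ` {0..})" unfolding class_Kinf_def by auto
  have "\<exists>a\<in>{0..}. g a > \<epsilon>"
  proof (rule ccontr)
    assume "\<not> ?thesis"
    then have "bdd_above (g ` {0..})" by (auto intro!: bdd_aboveI[of _ \<epsilon>] simp: not_less)
    with nb show False by simp
  qed
  then obtain a where a: "a \<in> {0..}" "g a > \<epsilon>" by blast
  have "\<exists>y. 0 \<le> y \<and> y \<le> a \<and> g y = \<epsilon>"
    by (rule IVT') (use a e g0 c in \<open>auto intro: continuous_on_subset\<close>)
  then obtain y where y: "0 \<le> y" "g y = \<epsilon>" by blast
  have inj: "inj_on g {0..}" using sm strict_mono_on_imp_inj_on by blast
  have "Kinf_inv g \<epsilon> = y" unfolding Kinf_inv_def using the_inv_into_f_f[OF inj, of y] y by simp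
  with lt have "x < y" by simp
  then have "g x < g y" using sm x0 y(1) by (auto intro: strict_mono_onD)
  with y show ?thesis by simp
qed

lemma blknorm_nonneg: "0 \<le> blknorm blk e i"
  unfolding blknorm_def by (simp add: sum_nonneg)

lemma not_jumpDi:
  assumes Kg: "class_Kinf (\<gamma> i)" and Ka: "class_Kinf (\<alpha>d i)" and s: "\<sigma> i \<ge> 0" and e: "\<epsilon> i > 0"
    and lt: "blknorm blk (err_of p) i < Kinf_inv (\<gamma> i) (\<epsilon> i)"
  shows "p \<notin> jumpDi blk \<alpha>d \<sigma> \<epsilon> \<gamma> i"
proof
  assume p: "p \<in> jumpDi blk \<alpha>d \<sigma> \<epsilon> \<gamma> i"
  obtain x z ee \<eta> where pe: "p = (x,z,ee,\<eta>)" by (cases p) auto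
  from p pe have eta: "\<eta> $ i \<ge> 0" and ge: "\<gamma> i (blknorm blk ee i) \<ge> \<sigma> i * \<alpha>d i (\<eta> $ i) + \<epsilon> i"
    unfolding jumpDi_def Qset_def by auto
  from Ka eta have "\<alpha>d i (\<eta> $ i) \<ge> 0" unfolding class_Kinf_def by auto
  with s have "\<sigma> i * \<alpha>d i (\<eta> $ i) \<ge> 0" by simp
  with ge have "\<gamma> i (blknorm blk ee i) \<ge> \<epsilon> i" by linarith
  moreover have "\<gamma> i (blknorm blk ee i) < \<epsilon> i"
    using Kinf_lt[OF Kg e blknorm_nonneg] lt pe unfolding err_of_def by simp
  ultimately show False by simp
qed

lemma prev_jump:
  assumes H: "hybrid_time_domain E" and sk: "(s, Suc j) \<in> E"
  shows "\<exists>s'. (s', j) \<in> E \<and> (s', Suc j) \<in> E"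
proof -
  from H sk obtain ts :: "nat \<Rightarrow> real" where mono: "\<forall>l\<le>Suc j. ts l \<le> ts (Suc l)"
    and eq: "E \<inter> ({0..s} \<times> {0..Suc j}) = (\<Union>l\<in>{0..Suc j}. {ts l..ts (Suc l)} \<times> {l})"
    unfolding hybrid_time_domain_def by fastforce
  have "(ts (Suc j), j) \<in> (\<Union>l\<in>{0..Suc j}. {ts l..ts (Suc l)} \<times> {l})" using mono by auto
  moreover have "(ts (Suc j), Suc j) \<in> (\<Union>l\<in>{0..Suc j}. {ts l..ts (Suc l)} \<times> {l})" using mono by auto
  ultimately show ?thesis using eq by blast
qed

theorem lemma1:
  fixes fp :: "'x::euclidean_space \<Rightarrow> 'u::euclidean_space \<Rightarrow> 'v::euclidean_space \<Rightarrow> 'x"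
    and h :: "'x \<Rightarrow> real^'m::finite"
    and blk :: "'m \<Rightarrow> 'n::finite"
    and U :: "'u set" and Vs :: "'v set"
    and fo :: "'z::euclidean_space \<Rightarrow> 'u \<Rightarrow> real^'m \<Rightarrow> real^'m \<Rightarrow> 'z"
    and \<psi> :: "'z \<Rightarrow> 'x" and \<psi>R :: "'x \<Rightarrow> 'z"
    and \<alpha>d \<gamma> :: "'n \<Rightarrow> real \<Rightarrow> real" and c b \<sigma> \<epsilon> :: "'n \<Rightarrow> real"
    and \<alpha>lo \<alpha>hi \<alpha> \<theta> :: "real \<Rightarrow> real"
    and V :: "'x \<times> 'z \<Rightarrow> real" and V' :: "'x \<times> 'z \<Rightarrow> ('x \<times> 'z) \<Rightarrow>\<^sub>L real"
    and w :: "real \<Rightarrow> 'u \<times> 'v"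
    and E :: "(real \<times> nat) set" and q :: "real \<Rightarrow> nat \<Rightarrow> ('x,'z,'m,'n) hstate"
  assumes blk_surj: "surj blk" and dims: "DIM('x) \<le> DIM('z)"
    and fp_cont: "continuous_on (UNIV \<times> U \<times> Vs) (\<lambda>(x,u,v). fp x u v)"
    and fp_lip: "local_lipschitz (U \<times> Vs) UNIV (\<lambda>(u,v) x. fp x u v)"
    and h_C1: "\<exists>h'. (\<forall>x. (h has_derivative blinfun_apply (h' x)) (at x)) \<and> continuous_on UNIV h'"
    and fo_cont: "continuous_on UNIV (\<lambda>(z,u,y,yh). fo z u y yh)"
    and \<psi>R_right_inv: "\<And>x. \<psi> (\<psi>R x) = x"
    and design: "\<And>i. class_Kinf (\<alpha>d i) \<and> c i \<ge> 0 \<and> 0 \<le> b i \<and> b i \<le> 1 \<and> \<sigma> i \<ge> 0 \<and> \<epsilon> i > 0"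
    and A2_K: "class_Kinf \<alpha>lo" "class_Kinf \<alpha>hi" "class_Kinf \<alpha>" "class_Kinf \<theta>" "\<And>i. class_Kinf (\<gamma> i)"
    and A2_V_nonneg: "\<And>p. V p \<ge> 0"
    and A2_V_C1: "\<forall>p. (V has_derivative blinfun_apply (V' p)) (at p)" "continuous_on UNIV V'"
    and A2_sandwich: "\<And>x z. \<alpha>lo (norm (x - \<psi> z)) \<le> V (x, z) \<and> V (x, z) \<le> \<alpha>hi (norm (\<psi>R x - z))"
    and A2_decay: "\<And>x z u v e yh. u \<in> U \<Longrightarrow> v \<in> Vs \<Longrightarrow>
        blinfun_apply (V' (x, z)) (fp x u v, fo z u (h x + e) yh)
          \<le> - \<alpha> (V (x, z)) + (\<Sum>i\<in>UNIV. \<gamma> i (blknorm blk e i)) + \<theta> (norm v)"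
    and w_input: "w \<in> Linf_loc (U \<times> Vs)"
    and sol: "is_solution (flowF fp fo h \<psi> blk \<alpha>d c \<gamma>) (flowC blk \<alpha>d \<sigma> \<epsilon> \<gamma>)
                (jumpD blk \<alpha>d \<sigma> \<epsilon> \<gamma>) (jumpG blk \<alpha>d \<sigma> \<epsilon> \<gamma> b) w E q"
  shows "(\<forall>i. (\<exists>(t,j)\<in>E. \<forall>(t',j')\<in>E. t' + real j' \<ge> t + real j \<longrightarrow>
                 blknorm blk (err_of (q t' j')) i < Kinf_inv (\<gamma> i) (\<epsilon> i))
            \<longrightarrow> bdd_above {k. \<exists>s. (s, k) \<in> jumpTimes blk \<alpha>d \<sigma> \<epsilon> \<gamma> b i E q})
       \<and> ((\<forall>i. \<exists>(t,j)\<in>E. \<forall>(t',j')\<in>E. t' + real j' \<ge> t + real j \<longrightarrow>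
                 blknorm blk (err_of (q t' j')) i < Kinf_inv (\<gamma> i) (\<epsilon> i))
            \<longrightarrow> bdd_above {k. \<exists>s. (s, k) \<in> E})"
proof -
  have H: "hybrid_time_domain E" using sol unfolding is_solution_def hybrid_arc_def by simp
  then have Epos: "\<And>t j. (t,j) \<in> E \<Longrightarrow> 0 \<le> t" unfolding hybrid_time_domain_def by auto
  have jD: "\<And>t j. (t,j) \<in> E \<Longrightarrow> (t,Suc j) \<in> E \<Longrightarrow> q t j \<in> jumpD blk \<alpha>d \<sigma> \<epsilon> \<gamma>"
    using sol unfolding is_solution_def by blast
  have noD: "\<And>i p. blknorm blk (err_of p) i < Kinf_inv (\<gamma> i) (\<epsilon> i) \<Longrightarrow> p \<notin> jumpDi blk \<alpha>d \<sigma> \<epsilon> \<gamma> i"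
    using not_jumpDi design A2_K(5) by blast
  have P1: "bdd_above {k. \<exists>s. (s, k) \<in> jumpTimes blk \<alpha>d \<sigma> \<epsilon> \<gamma> b i E q}"
    if "\<exists>(t,j)\<in>E. \<forall>(t',j')\<in>E. t' + real j' \<ge> t + real j \<longrightarrow>
                 blknorm blk (err_of (q t' j')) i < Kinf_inv (\<gamma> i) (\<epsilon> i)" for i
  proof -
    from that obtain t j where tj: "\<forall>(t',j')\<in>E. t' + real j' \<ge> t + real j \<longrightarrow>
                 blknorm blk (err_of (q t' j')) i < Kinf_inv (\<gamma> i) (\<epsilon> i)" by blast
    show ?thesis
    proof (rule bdd_aboveI[where M="nat \<lceil>t + real j\<rceil>"])
      fix k assume "k \<in> {k. \<exists>s. (s, k) \<in> jumpTimes blk \<alpha>d \<sigma> \<epsilon> \<gamma> b i E q}"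
      then obtain s where sk: "(s,k) \<in> E" "q s k \<in> jumpDi blk \<alpha>d \<sigma> \<epsilon> \<gamma> i"
        unfolding jumpTimes_def by blast
      have "\<not> (s + real k \<ge> t + real j)" using tj sk noD by blast
      moreover have "0 \<le> s" using Epos sk(1) .
      ultimately have "real k \<le> t + real j" by linarith
      then show "k \<le> nat \<lceil>t + real j\<rceil>" by linarith
    qed
  qed
  have P2: "bdd_above {k. \<exists>s. (s, k) \<in> E}"
    if all: "\<forall>i. \<exists>(t,j)\<in>E. \<forall>(t',j')\<in>E. t' + real j' \<ge> t + real j \<longrightarrow>
                 blknorm blk (err_of (q t' j')) i < Kinf_inv (\<gamma> i) (\<epsilon> i)"
  proof -
    have "\<forall>i. \<exists>p. p \<in> E \<and> (\<forall>(t',j')\<in>E. t' + real j' \<ge> fst p + real (snd p) \<longrightarrow>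
                 blknorm blk (err_of (q t' j')) i < Kinf_inv (\<gamma> i) (\<epsilon> i))"
    proof
      fix i
      from all obtain t j where "(t,j) \<in> E" "\<forall>(t',j')\<in>E. t' + real j' \<ge> t + real j \<longrightarrow>
                 blknorm blk (err_of (q t' j')) i < Kinf_inv (\<gamma> i) (\<epsilon> i)" by blast
      then show "\<exists>p. p \<in> E \<and> (\<forall>(t',j')\<in>E. t' + real j' \<ge> fst p + real (snd p) \<longrightarrow>
                 blknorm blk (err_of (q t' j')) i < Kinf_inv (\<gamma> i) (\<epsilon> i))"
        by (intro exI[of _ "(t,j)"]) simp
    qed
    then obtain TJ where TJ0: "\<forall>i. TJ i \<in> E \<and> (\<forall>(t',j')\<in>E. t' + real j' \<ge> fst (TJ i) + real (snd (TJ i)) \<longrightarrow>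
                 blknorm blk (err_of (q t' j')) i < Kinf_inv (\<gamma> i) (\<epsilon> i))"
      by (rule choice[THEN exE]) 
    define T where "T i = fst (TJ i)" for i
    define J where "J i = snd (TJ i)" for i
    have TJ: "\<And>i. \<forall>(t',j')\<in>E. t' + real j' \<ge> T i + real (J i) \<longrightarrow>
                 blknorm blk (err_of (q t' j')) i < Kinf_inv (\<gamma> i) (\<epsilon> i)"
      using TJ0 unfolding T_def J_def by blast
    define M where "M = Max (range (\<lambda>i. T i + real (J i)))"
    have leM: "\<And>i. T i + real (J i) \<le> M" unfolding M_def by (rule Max_ge) auto
    show ?thesis
    proof (rule bdd_aboveI[where M="nat \<lceil>M\<rceil> + 1"])
      fix k assume "k \<in> {k. \<exists>s. (s, k) \<in> E}"
      then obtain s where sk: "(s,k) \<in> E" by blast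
      show "k \<le> nat \<lceil>M\<rceil> + 1"
      proof (cases k)
        case 0 then show ?thesis by simp
      next
        case (Suc j)
        with prev_jump[OF H] sk obtain s' where s': "(s',j) \<in> E" "(s', Suc j) \<in> E" by blast
        then obtain i where Di: "q s' j \<in> jumpDi blk \<alpha>d \<sigma> \<epsilon> \<gamma> i"
          using jD unfolding jumpD_def by blast
        have "\<not> (s' + real j \<ge> T i + real (J i))" using TJ[of i] s' Di noD by blast
        moreover have "0 \<le> s'" using Epos s'(1) .
        ultimately have "real j \<le> M" using leM[of i] by linarith
        then show ?thesis using Suc by linarith
      qed
    qed
  qed
  show ?thesis using P1 P2 by blast
qed

end
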